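(* Let $r$ and $k$ be integers with $1 \le k \le r$. There exists $n_0 = n_0(r,k)$ such that for every $n \ge n_0$ the following holds. Let $\mathcal{H}$ be an intersecting $r$-uniform hypergraph on $n$ vertices with minimum positive co-degree $\delta_{r-1}^+(\mathcal{H}) \ge k$, and suppose $\mathcal{H}$ has the maximum number of hyperedges among all intersecting $r$-uniform $n$-vertex hypergraphs with minimum positive co-degree at least $k$. Then $\mathcal{H}$ is a $k$-kernel system.
   Context: A hypergraph is intersecting if every two of its hyperedges share at least one vertex. For a non-empty $r$-uniform hypergraph $\mathcal{H}$, the minimum positive co-degree $\delta_{r-1}^+(\mathcal{H})$ is the largest integer $k$ such that every $(r-1)$-set of vertices that is contained in at least one hyperedge of $\mathcal{H}$ is contained in at least $k$ distinct hyperedges of $\mathcal{H}$; for the empty hypergraph it is defined to be $0$. Given integers $r \ge k \ge 1$, an $r$-uniform $k$-kernel system on vertex set $V$ is a hypergraph whose hyperedge set is $\{E \in \binom{V}{r} : |E \cap X| \ge k\}$ for some distinguished set $X \subseteq V$ with $|X| = 2k-1$ (the kernel). *)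

theory Defs
  imports Main
begin

definition uniform_hg :: "nat \<Rightarrow> 'a set \<Rightarrow> 'a set set \<Rightarrow> bool" where
  "uniform_hg r V H \<longleftrightarrow> (\<forall>E\<in>H. E \<subseteq> V \<and> card E = r)"

definition intersecting :: "'a set set \<Rightarrow> bool" where
  "intersecting H \<longleftrightarrow> (\<forall>E\<in>H. \<forall>F\<in>H. E \<inter> F \<noteq> {})"

definition min_pos_codegree :: "nat \<Rightarrow> 'a set set \<Rightarrow> nat" where
  "min_pos_codegree r H = (if H = {} then 0 else
     (GREATEST k. \<forall>S. card S = r - 1 \<and> (\<exists>E\<in>H. S \<subseteq> E) \<longrightarrow> k \<le> card {E\<in>H. S \<subseteq> E}))"

definition kernel_system :: "nat \<Rightarrow> nat \<Rightarrow> 'a set \<Rightarrow> 'a set set \<Rightarrow> bool" where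
  "kernel_system r k V H \<longleftrightarrow> (\<exists>X. X \<subseteq> V \<and> card X = 2 * k - 1 \<and>
     H = {E. E \<subseteq> V \<and> card E = r \<and> k \<le> card (E \<inter> X)})"

end

theory Submission
  imports Defs Complex_Main
begin

definition codeg_ok :: "nat \<Rightarrow> nat \<Rightarrow> 'a set set \<Rightarrow> bool" where
  "codeg_ok r k H \<longleftrightarrow> (\<forall>S E. E \<in> H \<longrightarrow> S \<subseteq> E \<longrightarrow> card S = r - 1 \<longrightarrow> k \<le> card {F\<in>H. S \<subseteq> F})"

lemma extend_one:
  assumes "S \<subseteq> E" "finite E" "card E = Suc (card S)"
  shows "\<exists>y. y \<notin> S \<and> E = insert y S"
proof -
  have fS: "finite S" using assms finite_subset by blast
  have "card (E - S) = 1" using assms fS by (simp add: card_Diff_subset)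
  then obtain y where y: "E - S = {y}" by (auto simp: card_Suc_eq)
  then have "E = insert y S" using assms(1) by blast
  moreover have "y \<notin> S" using y by blast
  ultimately show ?thesis by blast
qed

lemma codeg_from_mpc:
  assumes "finite H" "H \<noteq> {}" "k \<le> min_pos_codegree r H" "\<forall>E\<in>H. card E = r"
  shows "codeg_ok r k H"
proof -
  define P where "P = (\<lambda>m. \<forall>S. card S = r - 1 \<and> (\<exists>E\<in>H. S \<subseteq> E) \<longrightarrow> m \<le> card {E\<in>H. S \<subseteq> E})"
  obtain E0 where E0: "E0 \<in> H" using assms(2) by blast
  obtain S0 where S0: "S0 \<subseteq> E0" "card S0 = r - 1"
    using obtain_subset_with_card_n[of "r - 1" E0] assms(4) E0 by force
  have bound: "y \<le> card H" if "P y" for y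
  proof -
    have "y \<le> card {E\<in>H. S0 \<subseteq> E}" using that S0 E0 unfolding P_def by blast
    also have "\<dots> \<le> card H" using assms(1) by (intro card_mono) auto
    finally show ?thesis .
  qed
  have P0: "P 0" unfolding P_def by simp
  have PG: "P (Greatest P)" using GreatestI_nat[of P 0 "card H"] P0 bound by blast
  have eq: "min_pos_codegree r H = Greatest P"
    unfolding min_pos_codegree_def P_def using assms(2) by simp
  show ?thesis unfolding codeg_ok_def
  proof (intro allI impI)
    fix S E assume "E \<in> H" "S \<subseteq> E" "card S = r - 1"
    then have "Greatest P \<le> card {F\<in>H. S \<subseteq> F}" using PG unfolding P_def by blast
    then show "k \<le> card {F\<in>H. S \<subseteq> F}" using assms(3) eq by simp
  qed
qed

lemma mpc_from_codeg:
  assumes "finite H" "H \<noteq> {}" "codeg_ok r k H" "\<forall>E\<in>H. card E = r"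
  shows "k \<le> min_pos_codegree r H"
proof -
  define P where "P = (\<lambda>m. \<forall>S. card S = r - 1 \<and> (\<exists>E\<in>H. S \<subseteq> E) \<longrightarrow> m \<le> card {E\<in>H. S \<subseteq> E})"
  have Pk: "P k" using assms(3) unfolding P_def codeg_ok_def by blast
  have bound: "y \<le> card H" if "P y" for y
  proof -
    obtain E0 where E0: "E0 \<in> H" using assms(2) by blast
    obtain S0 where S0: "S0 \<subseteq> E0" "card S0 = r - 1"
      using obtain_subset_with_card_n[of "r - 1" E0] assms(4) E0 by force
    have "y \<le> card {E\<in>H. S0 \<subseteq> E}" using that S0 E0 unfolding P_def by blast
    also have "\<dots> \<le> card H" using assms(1) by (intro card_mono) auto
    finally show ?thesis .
  qed
  have "k \<le> Greatest P" using Greatest_le_nat[of P k "card H"] Pk bound by blast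
  moreover have "min_pos_codegree r H = Greatest P"
    unfolding min_pos_codegree_def P_def using assms(2) by simp
  ultimately show ?thesis by simp
qed

lemma link_card:
  assumes fin: "finite G" and unif: "\<forall>W\<in>G. finite W \<and> card W = r"
    and cod: "codeg_ok r k G" and W: "W \<in> G" and x: "x \<in> W"
  shows "k \<le> card {y. y \<notin> W - {x} \<and> insert y (W - {x}) \<in> G}"
proof -
  let ?L = "{y. y \<notin> W - {x} \<and> insert y (W - {x}) \<in> G}"
  have fL: "finite ?L"
  proof (rule finite_subset)
    show "?L \<subseteq> \<Union>G" by blast
    show "finite (\<Union>G)" using fin unif by blast
  qed
  have cW: "card W = r" "finite W" using unif W by auto
  have cS: "card (W - {x}) = r - 1" using cW x by simp
  have "{F\<in>G. W - {x} \<subseteq> F} \<subseteq> (\<lambda>y. insert y (W - {x})) ` ?L"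
  proof
    fix F assume F: "F \<in> {F\<in>G. W - {x} \<subseteq> F}"
    have "card F = Suc (card (W - {x}))" using F unif cS cW x
      by (metis (no_types, lifting) Suc_diff_1 card_gt_0_iff empty_iff mem_Collect_eq)
    then obtain y where "y \<notin> W - {x}" "F = insert y (W - {x})"
      using extend_one[of "W - {x}" F] F unif by blast
    then show "F \<in> (\<lambda>y. insert y (W - {x})) ` ?L" using F by blast
  qed
  then have "card {F\<in>G. W - {x} \<subseteq> F} \<le> card ?L"
    using card_mono[OF finite_imageI[OF fL]] card_image_le[OF fL] le_trans by blast
  moreover have "k \<le> card {F\<in>G. W - {x} \<subseteq> F}"
    using cod W cS unfolding codeg_ok_def by blast
  ultimately show ?thesis by simp
qed

lemma split_swap:
  assumes fin: "finite G" and unif: "\<forall>W\<in>G. finite W \<and> card W = k"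
    and cod: "codeg_ok k k G" and inter: "intersecting G"
    and A: "A \<in> G" and B: "B \<in> G" and AB: "A \<inter> B = {z}" and w: "w \<in> A"
  shows "insert w (B - {z}) \<in> G"
proof -
  let ?L = "{y. y \<notin> B - {z} \<and> insert y (B - {z}) \<in> G}"
  have z: "z \<in> B" using AB by blast
  have "k \<le> card ?L" using link_card[OF fin unif cod B z] .
  have sub: "?L \<subseteq> A"
  proof
    fix y assume y: "y \<in> ?L"
    then have "A \<inter> insert y (B - {z}) \<noteq> {}" using inter A unfolding intersecting_def by blast
    then show "y \<in> A" using AB by blast
  qed
  have "finite A" "card A = k" using unif A by auto
  then have "?L = A" using card_subset_eq[OF _ sub] \<open>k \<le> card ?L\<close>
    by (metis (no_types, lifting) card_mono le_antisym sub)
  then show ?thesis using w by blast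
qed

lemma kernel_lemma:
  fixes G :: "'a set set"
  assumes k1: "1 \<le> k" and fin: "finite G" and ne: "G \<noteq> {}"
    and unif: "\<forall>W\<in>G. finite W \<and> card W = k"
    and inter: "intersecting G" and cod: "codeg_ok k k G"
  shows "\<exists>X. finite X \<and> card X = 2*k - 1 \<and> G = {U. U \<subseteq> X \<and> card U = k}"
proof -
  have sw: "\<And>A B z w. A \<in> G \<Longrightarrow> B \<in> G \<Longrightarrow> A \<inter> B = {z} \<Longrightarrow> w \<in> A \<Longrightarrow> insert w (B - {z}) \<in> G"
    using split_swap[OF fin unif cod inter] by blast
  obtain p where p: "p \<in> G \<times> G" and pmin: "\<And>q. q \<in> G \<times> G \<Longrightarrow> card (fst p \<inter> snd p) \<le> card (fst q \<inter> snd q)"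
    using ex_has_least_nat[of "\<lambda>q. q \<in> G \<times> G" _ "\<lambda>q. card (fst q \<inter> snd q)"] ne by fastforce
  obtain E F where EF: "p = (E, F)" by (cases p)
  have E: "E \<in> G" and F: "F \<in> G" using p EF by auto
  have fE: "finite E" "card E = k" and fF: "finite F" "card F = k" using E F unif by auto
  have EFne: "E \<inter> F \<noteq> {}" using inter E F unfolding intersecting_def by blast
  have minEF: "card (E \<inter> F) \<le> card (E' \<inter> F')" if "E' \<in> G" "F' \<in> G" for E' F'
    using pmin[of "(E', F')"] that EF by auto
  have t1: "card (E \<inter> F) = 1"
  proof (rule ccontr)
    assume "card (E \<inter> F) \<noteq> 1"
    moreover have "card (E \<inter> F) \<noteq> 0" using EFne fE by simp
    ultimately have t2: "card (E \<inter> F) \<ge> 2" by linarith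
    obtain x where x: "x \<in> E \<inter> F" using EFne by blast
    let ?L = "{y. y \<notin> F - {x} \<and> insert y (F - {x}) \<in> G}"
    have Lk: "k \<le> card ?L" using link_card[OF fin unif cod F] x by blast
    have sub: "?L \<subseteq> insert x (E - F)"
    proof
      fix y assume y: "y \<in> ?L"
      show "y \<in> insert x (E - F)"
      proof (rule ccontr)
        assume ny: "y \<notin> insert x (E - F)"
        have yE: "y \<notin> E" using ny y by blast
        have "E \<inter> insert y (F - {x}) = (E \<inter> F) - {x}" using yE by blast
        moreover have "card ((E \<inter> F) - {x}) < card (E \<inter> F)"
          using x fE by (meson card_Diff1_less finite_Int)
        ultimately show False using minEF[OF E] y by fastforce
      qed
    qed
    have "card (insert x (E - F)) \<le> Suc (card (E - F))" by (simp add: card_insert_le_m1)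
    moreover have "card (E - F) = k - card (E \<inter> F)"
      using fE by (simp add: card_Diff_subset_Int)
    moreover have "card ?L \<le> card (insert x (E - F))"
      using sub fE by (intro card_mono) auto
    moreover have "card (E \<inter> F) \<le> k" using fE by (metis card_mono inf_le1)
    ultimately show False using Lk t2 by linarith
  qed
  then obtain x where x: "E \<inter> F = {x}" by (auto simp: card_Suc_eq)
  define X where "X = E \<union> F"
  have fX: "finite X" using fE fF X_def by simp
  have cX: "card X = 2*k - 1"
    using card_Un_Int[of E F] fE fF t1 X_def by simp
  have EX: "E \<subseteq> X" using X_def by blast
  define Q where "Q = (\<lambda>U. U \<in> G \<and> (\<forall>z\<in>U. insert z (X - U) \<in> G))"
  have QE: "Q E"
  proof -
    have "X - E = F - {x}" using X_def x by blast
    then show ?thesis unfolding Q_def using E sw[OF E F x] by simp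
  qed
  have step: "Q (insert w (U - {z}))" if QU: "Q U" and UX: "U \<subseteq> X" and zU: "z \<in> U"
    and wX: "w \<in> X" and wU: "w \<notin> U" for U z w
  proof -
    define B where "B = insert z (X - U)"
    have B: "B \<in> G" using QU zU B_def unfolding Q_def by blast
    have U: "U \<in> G" using QU unfolding Q_def by blast
    have UB: "B \<inter> U = {z}" using B_def zU by blast
    have U'G: "insert w (U - {z}) \<in> G" using sw[OF B U UB] wX wU B_def by blast
    have U'B: "insert w (U - {z}) \<inter> B = {w}" using B_def wX wU zU by blast
    have "\<forall>z'\<in>insert w (U - {z}). insert z' (B - {w}) \<in> G" using sw[OF U'G B U'B] by blast
    moreover have "B - {w} = X - insert w (U - {z})" using B_def wU zU UX by blast
    ultimately show ?thesis unfolding Q_def using U'G by simp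
  qed
  have allQ: "\<forall>U. U \<subseteq> X \<and> card U = k \<and> card (E - U) = m \<longrightarrow> Q U" for m
  proof (induction m)
    case 0
    show ?case
    proof (intro allI impI)
      fix U assume U: "U \<subseteq> X \<and> card U = k \<and> card (E - U) = 0"
      then have "E \<subseteq> U" using fE by auto
      moreover have "finite U" using U fX finite_subset by blast
      ultimately have "E = U" using card_subset_eq U fE by metis
      then show "Q U" using QE by simp
    qed
  next
    case (Suc m)
    show ?case
    proof (intro allI impI)
      fix U assume U: "U \<subseteq> X \<and> card U = k \<and> card (E - U) = Suc m"
      have fU: "finite U" using U fX finite_subset by blast
      obtain z where z: "z \<in> E" "z \<notin> U" using U by (metis Diff_eq_empty_iff card_0_eq finite_Diff fE(1) nat.distinct(1) subsetI)
      have "card (U - E) = card (E - U)"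
        using fU fE U by (simp add: card_Diff_subset_Int Int_commute)
      then obtain w where w: "w \<in> U" "w \<notin> E" using U
        by (metis Diff_eq_empty_iff card_0_eq fU finite_Diff nat.distinct(1) subsetI)
      define U0 where "U0 = insert z (U - {w})"
      have U0X: "U0 \<subseteq> X" using U0_def U EX z by blast
      have cU0: "card U0 = k" using U0_def z w U fU k1 by (simp add: card.insert_remove)
      have "E - U0 = (E - U) - {z}" using U0_def w by blast
      then have "card (E - U0) = m" using U z fE by simp
      then have "Q U0" using Suc.IH U0X cU0 by blast
      moreover have "z \<in> U0" using U0_def by blast
      moreover have "w \<in> X" using w U by blast
      moreover have "w \<notin> U0" using U0_def w z by blast
      ultimately have "Q (insert w (U0 - {z}))" using step U0X by blast
      moreover have "insert w (U0 - {z}) = U" using U0_def w z by blast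
      ultimately show "Q U" by simp
    qed
  qed
  have sub1: "{U. U \<subseteq> X \<and> card U = k} \<subseteq> G"
    using allQ unfolding Q_def by blast
  have sub2: "G \<subseteq> {U. U \<subseteq> X \<and> card U = k}"
  proof
    fix W assume W: "W \<in> G"
    have fW: "finite W" "card W = k" using W unif by auto
    have "W \<subseteq> X"
    proof (rule ccontr)
      assume nW: "\<not> W \<subseteq> X"
      have "W \<inter> X \<subset> W" using nW by blast
      then have "card (W \<inter> X) < k" using fW psubset_card_mono by metis
      moreover have "card (X - W) = card X - card (X \<inter> W)"
        using fX by (simp add: card_Diff_subset_Int)
      ultimately have "k \<le> card (X - W)" using cX by (simp add: Int_commute)
      then obtain U where U: "U \<subseteq> X - W" "card U = k" using obtain_subset_with_card_n by metis
      then have "U \<in> G" using sub1 by blast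
      moreover have "U \<inter> W = {}" using U by blast
      ultimately show False using inter W unfolding intersecting_def by blast
    qed
    then show "W \<in> {U. U \<subseteq> X \<and> card U = k}" using fW by simp
  qed
  show ?thesis using sub1 sub2 fX cX by blast
qed

lemma no_small_cover:
  assumes fin: "finite H" and ne: "H \<noteq> {}" and unif: "\<forall>E\<in>H. finite E \<and> card E = r"
    and cod: "codeg_ok r k H" and fT: "finite T" and cT: "card T < k"
  shows "\<exists>E\<in>H. E \<inter> T = {}"
proof -
  have "\<forall>E\<in>H. card (E \<inter> T) = m \<longrightarrow> (\<exists>E'\<in>H. E' \<inter> T = {})" for m
  proof (induction m)
    case 0
    then show ?case using fT by auto
  next
    case (Suc m)
    show ?case
    proof (intro ballI impI)
      fix E assume E: "E \<in> H" and cE: "card (E \<inter> T) = Suc m"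
      have "E \<inter> T \<noteq> {}" using cE by force
      then obtain x where x: "x \<in> E \<inter> T" by blast
      let ?L = "{y. y \<notin> E - {x} \<and> insert y (E - {x}) \<in> H}"
      have "k \<le> card ?L" using link_card[OF fin unif cod E] x by blast
      have "\<not> ?L \<subseteq> T"
      proof
        assume "?L \<subseteq> T"
        then have "card ?L \<le> card T" by (rule card_mono[OF fT])
        then show False using cT \<open>k \<le> card ?L\<close> by linarith
      qed
      then obtain y where y: "y \<in> ?L" "y \<notin> T" by blast
      have E': "insert y (E - {x}) \<in> H" using y by blast
      have "insert y (E - {x}) \<inter> T = (E \<inter> T) - {x}" using y by blast
      moreover have "card ((E \<inter> T) - {x}) = m" using cE x by simp
      ultimately have "card (insert y (E - {x}) \<inter> T) = m" by simp
      then show "\<exists>E'\<in>H. E' \<inter> T = {}" using Suc.IH E' by blast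
    qed
  qed
  moreover obtain E where "E \<in> H" using ne by blast
  ultimately show ?thesis by blast
qed

fun Bf :: "nat \<Rightarrow> nat \<Rightarrow> nat" where
  "Bf r 0 = 0"
| "Bf r (Suc j) = Bf r j + 2 ^ (Bf r j) * r"

lemma Z_exists:
  assumes fin: "finite H" and ne: "H \<noteq> {}" and unif: "\<forall>E\<in>H. finite E \<and> card E = r"
    and HV: "\<forall>E\<in>H. E \<subseteq> V" and cod: "codeg_ok r k H" and inter: "intersecting H"
  shows "j \<le> k \<Longrightarrow> \<exists>Z \<subseteq> V. finite Z \<and> card Z \<le> Bf r j \<and> (\<forall>E\<in>H. j \<le> card (E \<inter> Z))"
proof (induction j)
  case 0
  then show ?case by (intro exI[of _ "{}"]) auto
next
  case (Suc j)
  then obtain Z where Z: "Z \<subseteq> V" "finite Z" "card Z \<le> Bf r j" "\<forall>E\<in>H. j \<le> card (E \<inter> Z)" by auto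
  define TT where "TT = {T. T \<subseteq> Z \<and> card T = j}"
  define Fs where "Fs = (\<lambda>T. SOME F. F \<in> H \<and> F \<inter> T = {})"
  have Fs: "Fs T \<in> H \<and> Fs T \<inter> T = {}" if "T \<in> TT" for T
  proof -
    have TZ: "T \<subseteq> Z" "card T = j" using that TT_def by auto
    have "finite T" using TZ(1) Z(2) by (rule finite_subset)
    moreover have "card T < k" using TZ(2) Suc.prems by simp
    ultimately
    have "\<exists>F. F \<in> H \<and> F \<inter> T = {}" using no_small_cover[OF fin ne unif cod] by blast
    then show ?thesis unfolding Fs_def by (rule someI_ex)
  qed
  define Z' where "Z' = Z \<union> (\<Union>T\<in>TT. Fs T)"
  have fTT: "finite TT" using Z(2) TT_def by simp
  have cTT: "card TT \<le> 2 ^ Bf r j"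
  proof -
    have "card TT \<le> card (Pow Z)" using Z(2) TT_def by (intro card_mono) auto
    also have "\<dots> = 2 ^ card Z" using Z(2) by (simp add: card_Pow)
    also have "\<dots> \<le> 2 ^ Bf r j" using Z(3) by (simp add: power_increasing)
    finally show ?thesis .
  qed
  have "card (\<Union>T\<in>TT. Fs T) \<le> (\<Sum>T\<in>TT. card (Fs T))" using card_UN_le[OF fTT] .
  also have "\<dots> = (\<Sum>T\<in>TT. r)" using Fs unif by (intro sum.cong) auto
  also have "\<dots> = card TT * r" by simp
  also have "\<dots> \<le> 2 ^ Bf r j * r" using cTT by simp
  finally have cU: "card (\<Union>T\<in>TT. Fs T) \<le> 2 ^ Bf r j * r" .
  have "card Z' \<le> card Z + card (\<Union>T\<in>TT. Fs T)" unfolding Z'_def by (rule card_Un_le)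
  then have cZ': "card Z' \<le> Bf r (Suc j)" using cU Z(3) by simp
  have fZ': "finite Z'" unfolding Z'_def
  proof (intro finite_UnI finite_UN_I)
    show "finite Z" by (rule Z(2))
    show "finite TT" by (rule fTT)
    fix T assume "T \<in> TT" then show "finite (Fs T)" using Fs unif by blast
  qed
  have Z'V: "Z' \<subseteq> V" unfolding Z'_def using Z(1) Fs HV by blast
  have propZ: "Suc j \<le> card (E \<inter> Z')" if E: "E \<in> H" for E
  proof -
    obtain T where T: "T \<subseteq> E \<inter> Z" "card T = j"
      using obtain_subset_with_card_n[of j "E \<inter> Z"] Z(4) E by blast
    have TTT: "T \<in> TT" using T TT_def by auto
    have "E \<inter> Fs T \<noteq> {}" using Fs[OF TTT] inter E unfolding intersecting_def by blast
    then obtain y where y: "y \<in> E" "y \<in> Fs T" by blast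
    have yT: "y \<notin> T" using y Fs[OF TTT] by blast
    have "insert y T \<subseteq> E \<inter> Z'" using T y TTT unfolding Z'_def by blast
    moreover have "finite (E \<inter> Z')" using fZ' by simp
    moreover have "finite T" using finite_subset[OF T(1)] Z(2) by blast
    moreover have "card (insert y T) = Suc j" using T(2) yT \<open>finite T\<close> by simp
    ultimately show ?thesis using card_mono[of "E \<inter> Z'" "insert y T"] by simp
  qed
  show ?case using Z'V fZ' cZ' propZ by blast
qed

lemma count_containing:
  assumes fV: "finite V" and HV: "\<forall>E\<in>H. E \<subseteq> V \<and> card E = r" and fS: "finite S"
  shows "card {E\<in>H. S \<subseteq> E} \<le> card V choose (r - card S)"
proof -
  let ?A = "{E\<in>H. S \<subseteq> E}"
  have inj: "inj_on (\<lambda>E. E - S) ?A"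
  proof (rule inj_onI)
    fix E F assume "E \<in> ?A" "F \<in> ?A" "E - S = F - S"
    then show "E = F" by blast
  qed
  have img: "(\<lambda>E. E - S) ` ?A \<subseteq> {B. B \<subseteq> V \<and> card B = r - card S}"
  proof
    fix B assume "B \<in> (\<lambda>E. E - S) ` ?A"
    then obtain E where E: "E \<in> H" "S \<subseteq> E" "B = E - S" by blast
    have "finite E" using E(1) HV fV finite_subset by blast
    then have "card B = r - card S" using E HV by (simp add: card_Diff_subset fS)
    moreover have "B \<subseteq> V" using E HV by blast
    ultimately show "B \<in> {B. B \<subseteq> V \<and> card B = r - card S}" by blast
  qed
  have "card ?A = card ((\<lambda>E. E - S) ` ?A)" using card_image[OF inj] by simp
  also have "\<dots> \<le> card {B. B \<subseteq> V \<and> card B = r - card S}"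
    by (rule card_mono[OF _ img]) (simp add: fV)
  also have "\<dots> = card V choose (r - card S)" using n_subsets[OF fV] .
  finally show ?thesis .
qed

lemma pigeon:
  assumes fA: "finite A" and img: "f ` A \<subseteq> C" and fC: "finite C" and cC: "card C \<le> P"
    and big: "P * h < card A"
  shows "\<exists>c\<in>C. h < card {x\<in>A. f x = c}"
proof (rule ccontr)
  assume "\<not> ?thesis"
  then have le: "\<forall>c\<in>C. card {x\<in>A. f x = c} \<le> h" by (simp add: not_less)
  have eqA: "A = (\<Union>c\<in>C. {x\<in>A. f x = c})" using img by blast
  have "card (\<Union>c\<in>C. {x\<in>A. f x = c}) \<le> (\<Sum>c\<in>C. card {x\<in>A. f x = c})" by (rule card_UN_le[OF fC])
  then have "card A \<le> (\<Sum>c\<in>C. card {x\<in>A. f x = c})" using eqA by simp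
  also have "\<dots> \<le> (\<Sum>c\<in>C. h)" using le by (intro sum_mono) auto
  also have "\<dots> = card C * h" by simp
  also have "\<dots> \<le> P * h" using cC by simp
  finally show False using big by simp
qed

definition Ksys :: "nat \<Rightarrow> nat \<Rightarrow> 'a set \<Rightarrow> 'a set \<Rightarrow> 'a set set" where
  "Ksys r k V X = {E. E \<subseteq> V \<and> card E = r \<and> k \<le> card (E \<inter> X)}"

lemma Ksys_lower:
  assumes fV: "finite V" and XV: "X \<subseteq> V" and cX: "card X = 2*k - 1" and kr: "k \<le> r" and k1: "1 \<le> k"
  shows "(card V - (2*k - 1)) choose (r - k) \<le> card (Ksys r k V X)"
proof -
  have "k \<le> card X" using cX k1 by simp
  then obtain A where A: "A \<subseteq> X" "card A = k" "finite A"
    using obtain_subset_with_card_n[of k X] by blast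
  let ?B = "{B. B \<subseteq> V - X \<and> card B = r - k}"
  have fX: "finite X" using XV fV finite_subset by blast
  have inj: "inj_on (\<lambda>B. A \<union> B) ?B"
  proof (rule inj_onI)
    fix B1 B2 assume B1: "B1 \<in> ?B" and B2: "B2 \<in> ?B" and eq: "A \<union> B1 = A \<union> B2"
    have "B1 = (A \<union> B1) - X" using A(1) B1 by blast
    also have "\<dots> = (A \<union> B2) - X" using eq by (rule arg_cong)
    also have "\<dots> = B2" using A(1) B2 by blast
    finally show "B1 = B2" .
  qed
  have img: "(\<lambda>B. A \<union> B) ` ?B \<subseteq> Ksys r k V X"
  proof
    fix E assume "E \<in> (\<lambda>B. A \<union> B) ` ?B"
    then obtain B where B: "B \<subseteq> V - X" "card B = r - k" "E = A \<union> B" by blast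
    have fB: "finite B" using B(1) fV by (meson finite_Diff finite_subset)
    have disj: "A \<inter> B = {}" using A(1) B(1) by blast
    have "card E = r" using B(2,3) A(2,3) fB disj kr by (simp add: card_Un_disjoint)
    moreover have "E \<inter> X = A" using A(1) B(1,3) by blast
    moreover have "E \<subseteq> V" using A(1) B(1,3) XV by blast
    ultimately show "E \<in> Ksys r k V X" unfolding Ksys_def using A(2) by simp
  qed
  have fK: "finite (Ksys r k V X)"
  proof (rule finite_subset)
    show "Ksys r k V X \<subseteq> Pow V" unfolding Ksys_def by blast
    show "finite (Pow V)" using fV by simp
  qed
  have cB: "card ?B = card (V - X) choose (r - k)" using n_subsets[of "V - X" "r - k"] fV by simp
  have cVX: "card (V - X) = card V - (2*k - 1)" using XV fX cX by (simp add: card_Diff_subset)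
  have "card ?B = card ((\<lambda>B. A \<union> B) ` ?B)" using card_image[OF inj] by simp
  moreover have "card ((\<lambda>B. A \<union> B) ` ?B) \<le> card (Ksys r k V X)" by (rule card_mono[OF fK img])
  ultimately show ?thesis using cB cVX by simp
qed

lemma Ksys_props:
  assumes fV: "finite V" and XV: "X \<subseteq> V" and cX: "card X = 2*k - 1" and kr: "k \<le> r" and k1: "1 \<le> k"
    and big: "r + k \<le> card V"
  shows "uniform_hg r V (Ksys r k V X)" "intersecting (Ksys r k V X)" "codeg_ok r k (Ksys r k V X)"
proof -
  have fX: "finite X" using XV fV finite_subset by blast
  show "uniform_hg r V (Ksys r k V X)" unfolding uniform_hg_def Ksys_def by blast
  show "intersecting (Ksys r k V X)" unfolding intersecting_def
  proof (intro ballI)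
    fix E F assume E: "E \<in> Ksys r k V X" and F: "F \<in> Ksys r k V X"
    show "E \<inter> F \<noteq> {}"
    proof
      assume EF: "E \<inter> F = {}"
      have "card ((E \<inter> X) \<union> (F \<inter> X)) = card (E \<inter> X) + card (F \<inter> X)"
        using EF fX by (intro card_Un_disjoint) auto
      moreover have "card ((E \<inter> X) \<union> (F \<inter> X)) \<le> card X" using fX by (intro card_mono) auto
      moreover have "k \<le> card (E \<inter> X)" "k \<le> card (F \<inter> X)" using E F unfolding Ksys_def by auto
      ultimately show False using cX k1 by linarith
    qed
  qed
  show "codeg_ok r k (Ksys r k V X)" unfolding codeg_ok_def
  proof (intro allI impI)
    fix S E assume E: "E \<in> Ksys r k V X" and SE: "S \<subseteq> E" and cS: "card S = r - 1"
    have EV: "E \<subseteq> V" "card E = r" "k \<le> card (E \<inter> X)" using E unfolding Ksys_def by auto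
    have fE: "finite E" using EV fV finite_subset by blast
    have fS: "finite S" using SE fE finite_subset by blast
    have r1: "1 \<le> r" using kr k1 by simp
    let ?A = "{F \<in> Ksys r k V X. S \<subseteq> F}"
    have fK: "finite (Ksys r k V X)"
    proof (rule finite_subset)
      show "Ksys r k V X \<subseteq> Pow V" unfolding Ksys_def by blast
      show "finite (Pow V)" using fV by simp
    qed
    have gen: "card Y \<le> card ?A" if Y: "Y \<inter> S = {}" "Y \<subseteq> V"
        and YK: "\<And>y. y \<in> Y \<Longrightarrow> k \<le> card (insert y S \<inter> X)" for Y
    proof -
      have inj: "inj_on (\<lambda>y. insert y S) Y"
      proof (rule inj_onI)
        fix y1 y2 assume "y1 \<in> Y" "y2 \<in> Y" "insert y1 S = insert y2 S"
        then show "y1 = y2" using Y(1) by blast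
      qed
      have img: "(\<lambda>y. insert y S) ` Y \<subseteq> ?A"
      proof
        fix F assume "F \<in> (\<lambda>y. insert y S) ` Y"
        then obtain y where y: "y \<in> Y" "F = insert y S" by blast
        have "y \<notin> S" using y Y by blast
        then have "card F = r" using y fS cS r1 by simp
        moreover have "F \<subseteq> V" using y Y SE EV by blast
        ultimately show "F \<in> ?A" using YK[OF y(1)] y unfolding Ksys_def by auto
      qed
      have "card Y = card ((\<lambda>y. insert y S) ` Y)" using card_image[OF inj] by simp
      also have "\<dots> \<le> card ?A" by (rule card_mono[OF _ img]) (use fK in simp)
      finally show ?thesis .
    qed
    show "k \<le> card ?A"
    proof (cases "k \<le> card (S \<inter> X)")
      case True
      have "card S \<le> card V" using SE EV fV by (intro card_mono) auto
      have "card (V - S) = card V - card S" using SE EV fS by (intro card_Diff_subset) auto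
      then have "k \<le> card (V - S)" using cS big by linarith
      moreover have "card (V - S) \<le> card ?A"
      proof (rule gen)
        show "(V - S) \<inter> S = {}" by blast
        show "V - S \<subseteq> V" by blast
      next
        fix y assume "y \<in> V - S"
        have "card (S \<inter> X) \<le> card (insert y S \<inter> X)" using fS by (intro card_mono) auto
        then show "k \<le> card (insert y S \<inter> X)" using True by linarith
      qed
      ultimately show ?thesis by linarith
    next
      case False
      have "card E = Suc (card S)" using EV cS r1 by simp
      then obtain x where x: "x \<notin> S" "E = insert x S" using extend_one[OF SE fE] by blast
      have "E \<inter> X \<subseteq> insert x (S \<inter> X)" using x by blast
      then have "card (E \<inter> X) \<le> card (insert x (S \<inter> X))" using fS by (intro card_mono) auto
      also have "\<dots> \<le> Suc (card (S \<inter> X))" using fS by (simp add: card_insert_if)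
      finally have cSX: "card (S \<inter> X) = k - 1" using EV(3) False by linarith
      have "card (X - S) = card X - card (X \<inter> S)" using fX by (simp add: card_Diff_subset_Int)
      moreover have "X \<inter> S = S \<inter> X" by blast
      ultimately have "card (X - S) = (2*k - 1) - (k - 1)" using cSX cX by simp
      then have "card (X - S) = k" using k1 by arith
      moreover have "card (X - S) \<le> card ?A"
      proof (rule gen)
        show "(X - S) \<inter> S = {}" by blast
        show "X - S \<subseteq> V" using XV by blast
      next
        fix y assume y: "y \<in> X - S"
        have "insert y S \<inter> X = insert y (S \<inter> X)" using y by blast
        then have "card (insert y S \<inter> X) = Suc (k - 1)" using y cSX fS by simp
        then show "k \<le> card (insert y S \<inter> X)" using k1 by simp
      qed
      ultimately show ?thesis by simp
    qed
  qed
qed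

locale setting =
  fixes r k :: nat and V :: "'a set" and H :: "'a set set" and Z :: "'a set" and B :: nat
  assumes k1: "1 \<le> k" and kr: "k < r" and fV: "finite V"
    and HV: "\<forall>E\<in>H. E \<subseteq> V \<and> card E = r" and inter: "intersecting H" and cod: "codeg_ok r k H"
    and ZV: "Z \<subseteq> V" and fZ: "finite Z" and cZ: "card Z \<le> B" and Zk: "\<forall>E\<in>H. k \<le> card (E \<inter> Z)"
begin

definition HW :: "'a set \<Rightarrow> 'a set set" where "HW W = {E\<in>H. E \<inter> Z = W}"
definition C1 :: nat where "C1 = card V choose (r - k - 1)"
definition M :: nat where "M = r * C1"
definition P :: nat where "P = 2 ^ B"
definition hh :: "nat \<Rightarrow> nat" where "hh i = M * P ^ (P - i)"
definition G :: "nat \<Rightarrow> 'a set set" where "G i = {W. W \<subseteq> Z \<and> card W = k \<and> hh i < card (HW W)}"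
definition D :: nat where "D = P * (r * P ^ P + 1)"

lemma fH: "finite H"
proof (rule finite_subset)
  show "H \<subseteq> Pow V" using HV by blast
  show "finite (Pow V)" using fV by simp
qed

lemma unifH: "\<forall>E\<in>H. finite E \<and> card E = r"
  using HV fV finite_subset by blast

lemma fHW: "finite (HW W)" unfolding HW_def using fH by simp

lemma P1: "1 \<le> P" unfolding P_def by simp

lemma cPowZ: "card (Pow Z) \<le> P"
  using fZ cZ unfolding P_def by (simp add: card_Pow power_increasing)

lemma fG: "finite (G i)"
proof (rule finite_subset)
  show "G i \<subseteq> Pow Z" unfolding G_def by blast
  show "finite (Pow Z)" using fZ by simp
qed

lemma hh_mono: "i \<le> j \<Longrightarrow> hh j \<le> hh i"
  unfolding hh_def using P1 by (simp add: power_increasing)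

lemma hh_M: "M \<le> hh i"
proof -
  have "1 \<le> P ^ (P - i)" using P1 by simp
  then show ?thesis unfolding hh_def by simp
qed

lemma hh_step: "i < P \<Longrightarrow> hh i = P * hh (Suc i)"
proof -
  assume "i < P"
  then have "P - i = Suc (P - Suc i)" by simp
  then show ?thesis unfolding hh_def by simp
qed

lemma G_mono: "G i \<subseteq> G (Suc i)"
  unfolding G_def using hh_mono[of i "Suc i"] by auto

lemma G_mono2: "i \<le> j \<Longrightarrow> G i \<subseteq> G j"
  unfolding G_def using hh_mono[of i j] by auto

lemma big_trace:
  assumes W: "W \<subseteq> Z" and cW: "k < card W"
  shows "card (HW W) \<le> C1"
proof -
  have fW: "finite W" using W fZ finite_subset by blast
  obtain S where S: "S \<subseteq> W" "card S = Suc k" "finite S"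
    using obtain_subset_with_card_n[of "Suc k" W] cW by auto
  have "HW W \<subseteq> {E\<in>H. S \<subseteq> E}" unfolding HW_def using S by blast
  then have "card (HW W) \<le> card {E\<in>H. S \<subseteq> E}" using fH by (intro card_mono) auto
  also have "\<dots> \<le> card V choose (r - card S)" by (rule count_containing[OF fV HV S(3)])
  also have "r - card S = r - k - 1" using S by simp
  finally show ?thesis unfolding C1_def .
qed

lemma small_trace:
  assumes "card W < k" shows "HW W = {}"
  using assms Zk unfolding HW_def by force

lemma good_choice:
  assumes U: "U \<subseteq> Z" "card U = k" and big: "M < card (HW U)" and fT: "finite T" and cT: "card T \<le> r"
  shows "\<exists>F\<in>HW U. (F - U) \<inter> T = {}"
proof (rule ccontr)
  assume "\<not> ?thesis"
  then have sub: "HW U \<subseteq> (\<Union>t\<in>T - Z. {F\<in>H. insert t U \<subseteq> F})"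
    unfolding HW_def by blast
  have fU: "finite U" using U fZ finite_subset by blast
  have each: "card {F\<in>H. insert t U \<subseteq> F} \<le> C1" if t: "t \<in> T - Z" for t
  proof -
    have "t \<notin> U" using t U by blast
    then have "card (insert t U) = Suc k" using fU U by simp
    moreover have "card {F\<in>H. insert t U \<subseteq> F} \<le> card V choose (r - card (insert t U))"
      by (rule count_containing[OF fV HV]) (simp add: fU)
    ultimately show ?thesis unfolding C1_def by simp
  qed
  have fTZ: "finite (T - Z)" using fT by simp
  have "card (HW U) \<le> card (\<Union>t\<in>T - Z. {F\<in>H. insert t U \<subseteq> F})"
    by (rule card_mono[OF _ sub]) (simp add: fTZ fH)
  also have "\<dots> \<le> (\<Sum>t\<in>T - Z. card {F\<in>H. insert t U \<subseteq> F})" by (rule card_UN_le[OF fTZ])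
  also have "\<dots> \<le> (\<Sum>t\<in>T - Z. C1)" using each by (intro sum_mono) auto
  also have "\<dots> = card (T - Z) * C1" by simp
  also have "\<dots> \<le> card T * C1" using fT by (intro mult_right_mono card_mono) auto
  also have "\<dots> \<le> r * C1" using cT by (intro mult_right_mono) auto
  finally show False using big unfolding M_def by simp
qed

lemma closure:
  assumes i: "i < P" and W: "W \<in> G i" and a: "a \<in> W"
  shows "\<exists>Y. finite Y \<and> k \<le> card Y \<and> Y \<inter> (W - {a}) = {} \<and> (\<forall>y\<in>Y. insert y (W - {a}) \<in> G (Suc i))"
proof -
  have WZ: "W \<subseteq> Z" and cW: "card W = k" and bigW: "hh i < card (HW W)" using W unfolding G_def by auto
  have fW: "finite W" using WZ fZ finite_subset by blast
  define YE where "YE = (\<lambda>E. {y. y \<notin> E - {a} \<and> insert y (E - {a}) \<in> H})"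
  have YEZ: "YE E \<subseteq> Z" if E: "E \<in> HW W" for E
  proof
    fix y assume y: "y \<in> YE E"
    show "y \<in> Z"
    proof (rule ccontr)
      assume yZ: "y \<notin> Z"
      have EZ: "E \<inter> Z = W" and EH: "E \<in> H" using E unfolding HW_def by auto
      have "insert y (E - {a}) \<inter> Z = W - {a}" using yZ EZ by blast
      moreover have "card (W - {a}) < k" using cW a fW k1 by simp
      moreover have "insert y (E - {a}) \<in> H" using y unfolding YE_def by blast
      then have "k \<le> card (insert y (E - {a}) \<inter> Z)" using Zk by blast
      ultimately show False by simp
    qed
  qed
  have YEk: "k \<le> card (YE E)" if E: "E \<in> HW W" for E
  proof -
    have EH: "E \<in> H" and aE: "a \<in> E" using E a unfolding HW_def by auto
    show ?thesis unfolding YE_def using link_card[OF fH unifH cod EH aE] .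
  qed
  have img0: "YE ` HW W \<subseteq> Pow Z" using YEZ by blast
  have big0: "P * hh (Suc i) < card (HW W)" using bigW hh_step[OF i] by simp
  have fPZ: "finite (Pow Z)" using fZ by simp
  have "\<exists>c\<in>Pow Z. hh (Suc i) < card {x\<in>HW W. YE x = c}"
    by (rule pigeon[OF fHW img0 fPZ cPowZ big0])
  then obtain Y where YZ: "Y \<in> Pow Z" and bigY: "hh (Suc i) < card {E\<in>HW W. YE E = Y}"
    by blast
  let ?AY = "{E\<in>HW W. YE E = Y}"
  have "0 < card ?AY" using bigY by simp
  then have "?AY \<noteq> {}" using card_gt_0_iff by blast
  then obtain E0 where E0: "E0 \<in> HW W" "YE E0 = Y" by blast
  have E0W: "W \<subseteq> E0" using E0 unfolding HW_def by blast
  have fY: "finite Y" using YZ fZ finite_subset by blast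
  have kY: "k \<le> card Y" using YEk[OF E0(1)] E0(2) by simp
  have disj: "Y \<inter> (W - {a}) = {}" using E0 E0W unfolding YE_def by blast
  have "insert y (W - {a}) \<in> G (Suc i)" if y: "y \<in> Y" for y
  proof -
    have yZ: "y \<in> Z" using y YZ by blast
    have W'Z: "insert y (W - {a}) \<subseteq> Z" using yZ WZ by blast
    have "y \<notin> W - {a}" using y disj by blast
    then have cW': "card (insert y (W - {a})) = k" using fW cW a k1 by simp
    define g where "g = (\<lambda>E. insert y (E - {a}))"
    have inj: "inj_on g ?AY"
    proof (cases "y = a")
      case True
      show ?thesis
      proof (rule inj_onI)
        fix E1 E2 assume E1: "E1 \<in> ?AY" and E2: "E2 \<in> ?AY" and eq: "g E1 = g E2"
        have "a \<in> E1" "a \<in> E2" using E1 E2 a unfolding HW_def by auto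
        then have "g E1 = E1" "g E2 = E2" unfolding g_def using True by auto
        then show "E1 = E2" using eq by metis
      qed
    next
      case False
      have rec: "E = insert a (g E - {y})" if E: "E \<in> ?AY" for E
      proof -
        have "y \<in> YE E" using E y by simp
        then have "y \<notin> E - {a}" unfolding YE_def by blast
        then have "y \<notin> E" using False by blast
        moreover have "a \<in> E" using E a unfolding HW_def by auto
        ultimately show ?thesis unfolding g_def using False by blast
      qed
      show ?thesis
      proof (rule inj_onI)
        fix E1 E2 assume E1: "E1 \<in> ?AY" and E2: "E2 \<in> ?AY" and eq: "g E1 = g E2"
        have "E1 = insert a (g E1 - {y})" by (rule rec[OF E1])
        also have "\<dots> = insert a (g E2 - {y})" using eq by (rule arg_cong)
        also have "\<dots> = E2" by (rule rec[OF E2, symmetric])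
        finally show "E1 = E2" .
      qed
    qed
    have img: "g ` ?AY \<subseteq> HW (insert y (W - {a}))"
    proof
      fix F assume "F \<in> g ` ?AY"
      then obtain E where E: "E \<in> ?AY" "F = g E" by blast
      have "y \<in> YE E" using E y by simp
      then have FH: "F \<in> H" using E unfolding YE_def g_def by blast
      have "E \<inter> Z = W" using E unfolding HW_def by blast
      then have "F \<inter> Z = insert y (W - {a})" using E(2) yZ unfolding g_def by blast
      then show "F \<in> HW (insert y (W - {a}))" using FH unfolding HW_def by blast
    qed
    have "card ?AY = card (g ` ?AY)" using card_image[OF inj] by simp
    also have "\<dots> \<le> card (HW (insert y (W - {a})))" by (rule card_mono[OF fHW img])
    finally have "hh (Suc i) < card (HW (insert y (W - {a})))" using bigY by simp
    then show ?thesis unfolding G_def using W'Z cW' by blast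
  qed
  then show ?thesis using fY kY disj by blast
qed

end

context setting begin

lemma heavy_exists:
  assumes bigH: "D * C1 < card H"
  shows "G 0 \<noteq> {}"
proof
  assume G0: "G 0 = {}"
  have each: "card (HW W) \<le> hh 0 + C1" if W: "W \<in> Pow Z" for W
  proof -
    have WZ: "W \<subseteq> Z" using W by blast
    consider "card W < k" | "card W = k" | "k < card W" by linarith
    then show ?thesis
    proof cases
      case 1 then show ?thesis using small_trace by simp
    next
      case 2
      then have "W \<notin> G 0" using G0 by blast
      then have "card (HW W) \<le> hh 0" using WZ 2 unfolding G_def by auto
      then show ?thesis by simp
    next
      case 3 then show ?thesis using big_trace[OF WZ] by simp
    qed
  qed
  have Hs: "H = (\<Union>W\<in>Pow Z. HW W)"
  proof
    show "H \<subseteq> (\<Union>W\<in>Pow Z. HW W)"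
    proof
      fix E assume E: "E \<in> H"
      have "E \<in> HW (E \<inter> Z)" using E unfolding HW_def by simp
      moreover have "E \<inter> Z \<in> Pow Z" by simp
      ultimately show "E \<in> (\<Union>W\<in>Pow Z. HW W)" by blast
    qed
    show "(\<Union>W\<in>Pow Z. HW W) \<subseteq> H" unfolding HW_def by blast
  qed
  have fPZ: "finite (Pow Z)" using fZ by simp
  have "card (\<Union>W\<in>Pow Z. HW W) \<le> (\<Sum>W\<in>Pow Z. card (HW W))" by (rule card_UN_le[OF fPZ])
  also have "\<dots> \<le> (\<Sum>W\<in>Pow Z. hh 0 + C1)" using each by (intro sum_mono) auto
  also have "\<dots> = card (Pow Z) * (hh 0 + C1)" by simp
  also have "\<dots> \<le> P * (hh 0 + C1)" using cPowZ by (intro mult_right_mono) auto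
  also have "\<dots> = D * C1" unfolding D_def hh_def M_def by (simp add: algebra_simps)
  finally have le: "card (\<Union>W\<in>Pow Z. HW W) \<le> D * C1" .
  have "card H = card (\<Union>W\<in>Pow Z. HW W)" using arg_cong[where f=card, OF Hs] .
  then have "card H \<le> D * C1" using le by linarith
  then show False using bigH by simp
qed

lemma stabilize:
  assumes G0: "G 0 \<noteq> {}"
  shows "\<exists>i<P. G (Suc i) \<subseteq> G i"
proof (rule ccontr)
  assume "\<not> ?thesis"
  note nt = this
  have strict: "card (G i) < card (G (Suc i))" if "i < P" for i
  proof -
    have "\<not> G (Suc i) \<subseteq> G i" using nt that by blast
    then have "G i \<subset> G (Suc i)" using G_mono[of i] by blast
    then show ?thesis by (rule psubset_card_mono[OF fG])
  qed
  have grow: "i \<le> P \<Longrightarrow> Suc i \<le> card (G i)" for i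
  proof (induction i)
    case 0
    have "0 < card (G 0)" using G0 fG card_gt_0_iff by blast
    then show ?case by simp
  next
    case (Suc i)
    then have "Suc i \<le> card (G i)" by simp
    moreover have "card (G i) < card (G (Suc i))" using strict Suc.prems by simp
    ultimately show ?case by simp
  qed
  have "Suc P \<le> card (G P)" using grow by simp
  moreover have "card (G P) \<le> card (Pow Z)"
  proof (rule card_mono)
    show "finite (Pow Z)" using fZ by simp
    show "G P \<subseteq> Pow Z" unfolding G_def by blast
  qed
  ultimately show False using cPowZ by simp
qed

lemma final:
  assumes bigH: "D * C1 < card H"
    and maxK: "\<forall>X. X \<subseteq> V \<and> card X = 2*k - 1 \<longrightarrow> card (Ksys r k V X) \<le> card H"
  shows "\<exists>X. X \<subseteq> V \<and> card X = 2*k - 1 \<and> H = Ksys r k V X"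
proof -
  have G0: "G 0 \<noteq> {}" by (rule heavy_exists[OF bigH])
  obtain i where i: "i < P" and st: "G (Suc i) \<subseteq> G i" using stabilize[OF G0] by blast
  have GS: "G (Suc i) = G i" using st G_mono by blast
  let ?GG = "G i"
  have Mh: "M \<le> hh i" by (rule hh_M)
  have GGne: "?GG \<noteq> {}" using G0 G_mono2[of 0 i] by blast
  have GGu: "\<forall>W\<in>?GG. finite W \<and> card W = k"
  proof
    fix W assume "W \<in> ?GG"
    then have "W \<subseteq> Z" "card W = k" unfolding G_def by auto
    then show "finite W \<and> card W = k" using finite_subset[OF _ fZ] by blast
  qed
  have HWne: "HW W \<noteq> {}" if "W \<in> ?GG" for W
  proof -
    have "hh i < card (HW W)" using that unfolding G_def by blast
    then have "0 < card (HW W)" by linarith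
    then show ?thesis using card_gt_0_iff by blast
  qed
  have GGint: "intersecting ?GG" unfolding intersecting_def
  proof (intro ballI)
    fix W U assume W: "W \<in> ?GG" and U: "U \<in> ?GG"
    obtain E where E: "E \<in> HW W" using HWne[OF W] by blast
    have EH: "E \<in> H" and EZ: "E \<inter> Z = W" using E unfolding HW_def by auto
    have UZ: "U \<subseteq> Z" "card U = k" "hh i < card (HW U)" using U unfolding G_def by auto
    have fE: "finite E" "card E = r" using unifH EH by auto
    obtain F where F: "F \<in> HW U" "(F - U) \<inter> E = {}"
    proof -
      have "M < card (HW U)" using Mh UZ(3) by linarith
      moreover have "card E \<le> r" using fE(2) by simp
      ultimately show ?thesis using good_choice[OF UZ(1,2) _ fE(1)] that by blast
    qed
    have FH: "F \<in> H" and FZ: "F \<inter> Z = U" using F unfolding HW_def by auto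
    have "E \<inter> F \<noteq> {}" using inter EH FH unfolding intersecting_def by blast
    then obtain t where t: "t \<in> E" "t \<in> F" by blast
    show "W \<inter> U \<noteq> {}"
    proof (cases "t \<in> Z")
      case True
      then have "t \<in> W" "t \<in> U" using t EZ FZ by blast+
      then show ?thesis by blast
    next
      case False
      then have "t \<notin> U" using UZ by blast
      then show ?thesis using F(2) t by blast
    qed
  qed
  have GGcod: "codeg_ok k k ?GG" unfolding codeg_ok_def
  proof (intro allI impI)
    fix S W assume W: "W \<in> ?GG" and SW: "S \<subseteq> W" and cS: "card S = k - 1"
    have fW: "finite W" "card W = k" using GGu W by auto
    have "card S < card W" using cS fW k1 by simp
    then have "W - S \<noteq> {}" using SW by auto
    then obtain a where a: "a \<in> W" "a \<notin> S" by blast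
    have "S \<subseteq> W - {a}" using SW a by blast
    moreover have "card (W - {a}) = card S" using fW a cS by simp
    moreover have "finite (W - {a})" using fW by simp
    ultimately have Sa: "S = W - {a}" using card_subset_eq[of "W - {a}" S] by simp
    obtain Y where Y: "finite Y" "k \<le> card Y" "Y \<inter> (W - {a}) = {}"
      "\<forall>y\<in>Y. insert y (W - {a}) \<in> G (Suc i)"
      using closure[OF i W a(1)] by blast
    have inj: "inj_on (\<lambda>y. insert y S) Y"
    proof (rule inj_onI)
      fix y1 y2 assume "y1 \<in> Y" "y2 \<in> Y" "insert y1 S = insert y2 S"
      then show "y1 = y2" using Y(3) Sa by blast
    qed
    have img: "(\<lambda>y. insert y S) ` Y \<subseteq> {U\<in>?GG. S \<subseteq> U}"
    proof
      fix U assume "U \<in> (\<lambda>y. insert y S) ` Y"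
      then obtain y where y: "y \<in> Y" "U = insert y S" by blast
      have "insert y (W - {a}) \<in> G (Suc i)" using Y(4) y(1) by blast
      then have "U \<in> ?GG" using GS Sa y(2) by simp
      then show "U \<in> {U\<in>?GG. S \<subseteq> U}" using y(2) by blast
    qed
    have "card Y = card ((\<lambda>y. insert y S) ` Y)" using card_image[OF inj] by simp
    also have "\<dots> \<le> card {U\<in>?GG. S \<subseteq> U}" by (rule card_mono[OF _ img]) (simp add: fG)
    finally show "k \<le> card {U\<in>?GG. S \<subseteq> U}" using Y(2) by simp
  qed
  obtain X where X: "finite X" "card X = 2*k - 1" and GGX: "?GG = {U. U \<subseteq> X \<and> card U = k}"
    using kernel_lemma[OF k1 fG GGne GGu GGint GGcod] by blast
  have XV: "X \<subseteq> V"
  proof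
    fix x assume x: "x \<in> X"
    have "k - 1 \<le> card (X - {x})" using X x by simp
    then obtain U0 where U0: "U0 \<subseteq> X - {x}" "card U0 = k - 1" "finite U0"
      using obtain_subset_with_card_n[of "k - 1" "X - {x}"] by blast
    have "x \<notin> U0" using U0 by blast
    then have "card (insert x U0) = k" using U0 k1 by simp
    moreover have "insert x U0 \<subseteq> X" using U0 x by blast
    ultimately have "insert x U0 \<in> ?GG" using GGX by blast
    then have "insert x U0 \<subseteq> Z" unfolding G_def by blast
    then show "x \<in> V" using ZV by blast
  qed
  have HK: "H \<subseteq> Ksys r k V X"
  proof
    fix E assume EH: "E \<in> H"
    have fE: "finite E" "card E = r" "E \<subseteq> V" using unifH HV EH by auto
    have "k \<le> card (E \<inter> X)"
    proof (rule ccontr)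
      assume "\<not> k \<le> card (E \<inter> X)"
      then have lt: "card (E \<inter> X) \<le> k - 1" by simp
      have "card (X - E) = card X - card (X \<inter> E)" using X(1) by (simp add: card_Diff_subset_Int)
      moreover have "X \<inter> E = E \<inter> X" by blast
      ultimately have "card (X - E) \<ge> (2*k - 1) - (k - 1)" using X(2) lt by simp
      then have "k \<le> card (X - E)" using k1 by arith
      then obtain U where U: "U \<subseteq> X - E" "card U = k" "finite U"
        using obtain_subset_with_card_n[of k "X - E"] by blast
      have UG: "U \<in> ?GG" using U GGX by blast
      have UZ: "U \<subseteq> Z" "card U = k" "hh i < card (HW U)" using UG unfolding G_def by auto
      obtain F where F: "F \<in> HW U" "(F - U) \<inter> E = {}"
      proof -
      have "M < card (HW U)" using Mh UZ(3) by linarith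
      moreover have "card E \<le> r" using fE(2) by simp
      ultimately show ?thesis using good_choice[OF UZ(1,2) _ fE(1)] that by blast
    qed
      have FH: "F \<in> H" using F unfolding HW_def by auto
      have "E \<inter> F = {}" using F(2) U(1) by blast
      then show False using inter EH FH unfolding intersecting_def by blast
    qed
    then show "E \<in> Ksys r k V X" unfolding Ksys_def using fE by simp
  qed
  have fK: "finite (Ksys r k V X)"
  proof (rule finite_subset)
    show "Ksys r k V X \<subseteq> Pow V" unfolding Ksys_def by blast
    show "finite (Pow V)" using fV by simp
  qed
  have "card (Ksys r k V X) \<le> card H" using maxK XV X(2) by blast
  moreover have "card H \<le> card (Ksys r k V X)" by (rule card_mono[OF fK HK])
  ultimately have "card H = card (Ksys r k V X)" by linarith
  then have "H = Ksys r k V X" by (rule card_subset_eq[OF fK HK])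
  then show ?thesis using XV X(2) by blast
qed

end

lemma asym:
  fixes n j r c D :: nat
  assumes j1: "1 \<le> j" and jr: "j \<le> r" and n4: "4 * r \<le> n" and cr: "c \<le> 2 * r"
    and nD: "D * (2 * r) ^ r < n"
  shows "D * (n choose (j - 1)) < (n - c) choose j"
proof -
  define m where "m = n - c"
  have mn: "real n / 2 \<le> real m" using n4 cr unfolding m_def by simp
  have jm: "j \<le> m" using n4 cr jr unfolding m_def by simp
  have n0: "0 < n" using nD by simp
  have b1: "real (n choose (j - 1)) \<le> real n ^ (j - 1)"
  proof -
    have "n choose (j - 1) \<le> n ^ (j - 1)" using binomial_le_pow[of "j - 1" n] jr n4 by simp
    then show ?thesis by (metis of_nat_le_iff of_nat_power)
  qed
  have b2: "(real m / real j) ^ j \<le> real (m choose j)" using binomial_ge_n_over_k_pow_k[OF jm] by simp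
  have b3: "(real n / (2 * real j)) ^ j \<le> (real m / real j) ^ j"
  proof (rule power_mono)
    show "real n / (2 * real j) \<le> real m / real j" using mn j1
      by (simp add: divide_simps)
    show "0 \<le> real n / (2 * real j)" by simp
  qed
  have pj: "(2 * real j) ^ j \<le> (2 * real r) ^ r"
  proof -
    have "(2 * real j) ^ j \<le> (2 * real r) ^ j" using jr by (intro power_mono) auto
    also have "\<dots> \<le> (2 * real r) ^ r" using jr j1 by (intro power_increasing) auto
    finally show ?thesis .
  qed
  have nD': "real D * (2 * real r) ^ r < real n"
  proof -
    have "real (D * (2 * r) ^ r) < real n" using nD by (simp only: of_nat_less_iff)
    then show ?thesis by simp
  qed
  have pos: "0 < (2 * real j) ^ j" using j1 by simp
  have key: "real D * real n ^ (j - 1) < (real n / (2 * real j)) ^ j"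
  proof -
    have e: "(real n / (2 * real j)) ^ j = real n * real n ^ (j - 1) / (2 * real j) ^ j"
      using j1 by (simp add: power_divide power_eq_if[of "real n" j])
    have "real D * (2 * real j) ^ j \<le> real D * (2 * real r) ^ r" using pj by (simp add: mult_left_mono)
    then have lt: "real D * (2 * real j) ^ j < real n" using nD' by linarith
    have npos: "0 < real n ^ (j - 1)" using n0 by simp
    have "real D * real n ^ (j - 1) * (2 * real j) ^ j < real n * real n ^ (j - 1)"
    proof -
      have "real D * real n ^ (j - 1) * (2 * real j) ^ j = (real D * (2 * real j) ^ j) * real n ^ (j - 1)"
        by (simp add: algebra_simps)
      also have "\<dots> < real n * real n ^ (j - 1)" using lt npos by (intro mult_strict_right_mono) auto
      finally show ?thesis .
    qed
    then show ?thesis unfolding e using pos by (simp add: divide_simps)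
  qed
  have "real (D * (n choose (j - 1))) \<le> real D * real n ^ (j - 1)" using b1 by (simp add: mult_left_mono)
  also have "\<dots> < real (m choose j)" using key b3 b2 by linarith
  finally show ?thesis unfolding m_def by (simp only: of_nat_less_iff)
qed

lemma competitor:
  assumes k1: "1 \<le> k" and kr: "k \<le> r" and fV: "finite V" and n4: "4 * r \<le> card V"
    and XV: "X \<subseteq> V" and cX: "card X = 2*k - 1"
  shows "uniform_hg r V (Ksys r k V X) \<and> intersecting (Ksys r k V X)
    \<and> k \<le> min_pos_codegree r (Ksys r k V X)
    \<and> (card V - (2*k - 1)) choose (r - k) \<le> card (Ksys r k V X) \<and> 0 < card (Ksys r k V X)"
proof -
  have big: "r + k \<le> card V" using n4 kr by simp
  note props = Ksys_props[OF fV XV cX kr k1 big]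
  have low: "(card V - (2*k - 1)) choose (r - k) \<le> card (Ksys r k V X)"
    by (rule Ksys_lower[OF fV XV cX kr k1])
  have "r - k \<le> card V - (2*k - 1)" using n4 kr by simp
  then have "0 < (card V - (2*k - 1)) choose (r - k)" by simp
  then have pos: "0 < card (Ksys r k V X)" using low by linarith
  have fK: "finite (Ksys r k V X)"
  proof (rule finite_subset)
    show "Ksys r k V X \<subseteq> Pow V" unfolding Ksys_def by blast
    show "finite (Pow V)" using fV by simp
  qed
  have ne: "Ksys r k V X \<noteq> {}" using pos by auto
  have u: "\<forall>E\<in>Ksys r k V X. card E = r" unfolding Ksys_def by blast
  have "k \<le> min_pos_codegree r (Ksys r k V X)"
    by (rule mpc_from_codeg[OF fK ne props(3) u])
  then show ?thesis using props(1,2) low pos by blast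
qed

theorem theorem1:
  fixes r k :: nat
  assumes "1 \<le> k" and "k \<le> r"
  shows "\<exists>n0. \<forall>n\<ge>n0. \<forall>(V::nat set) H.
    finite V \<and> card V = n \<and> uniform_hg r V H \<and> intersecting H \<and>
    k \<le> min_pos_codegree r H \<and>
    (\<forall>H'. uniform_hg r V H' \<and> intersecting H' \<and> k \<le> min_pos_codegree r H'
           \<longrightarrow> card H' \<le> card H)
    \<longrightarrow> kernel_system r k V H"
proof -
  have k1: "1 \<le> k" and kr: "k \<le> r" using assms by auto
  define B where "B = Bf r k"
  define Dc where "Dc = 2 ^ B * (r * (2 ^ B) ^ (2 ^ B) + 1)"
  define n0 where "n0 = 4 * r + Dc * (2 * r) ^ r + 1"
  show ?thesis
  proof (intro exI[of _ n0] allI impI)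
    fix n and V :: "nat set" and H
    assume n: "n0 \<le> n"
    assume A: "finite V \<and> card V = n \<and> uniform_hg r V H \<and> intersecting H \<and>
      k \<le> min_pos_codegree r H \<and>
      (\<forall>H'. uniform_hg r V H' \<and> intersecting H' \<and> k \<le> min_pos_codegree r H'
           \<longrightarrow> card H' \<le> card H)"
    have fV: "finite V" and cV: "card V = n" and UH: "uniform_hg r V H" and IH: "intersecting H"
      and CH: "k \<le> min_pos_codegree r H"
      and Mx: "\<And>H'. uniform_hg r V H' \<Longrightarrow> intersecting H' \<Longrightarrow> k \<le> min_pos_codegree r H' \<Longrightarrow> card H' \<le> card H"
      using A by auto
    have n4: "4 * r \<le> card V" using n cV unfolding n0_def by simp
    have nD: "Dc * (2 * r) ^ r < n" using n unfolding n0_def by simp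
    have HV: "\<forall>E\<in>H. E \<subseteq> V \<and> card E = r" using UH unfolding uniform_hg_def by blast
    have fH: "finite H"
    proof (rule finite_subset)
      show "H \<subseteq> Pow V" using HV by blast
      show "finite (Pow V)" using fV by simp
    qed
    have unifH: "\<forall>E\<in>H. finite E \<and> card E = r" using HV fV finite_subset by blast
    have maxK: "\<forall>X. X \<subseteq> V \<and> card X = 2*k - 1 \<longrightarrow> card (Ksys r k V X) \<le> card H"
    proof (intro allI impI)
      fix X assume X: "X \<subseteq> V \<and> card X = 2*k - 1"
      have c: "uniform_hg r V (Ksys r k V X) \<and> intersecting (Ksys r k V X)
        \<and> k \<le> min_pos_codegree r (Ksys r k V X)"
        using competitor[OF k1 kr fV n4] X by blast
      show "card (Ksys r k V X) \<le> card H" using Mx c by blast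
    qed
    have "2*k - 1 \<le> card V" using n4 kr by simp
    then obtain X0 where X0: "X0 \<subseteq> V" "card X0 = 2*k - 1" "finite X0"
      using obtain_subset_with_card_n[of "2*k - 1" V] by blast
    have c0: "(card V - (2*k - 1)) choose (r - k) \<le> card (Ksys r k V X0) \<and> 0 < card (Ksys r k V X0)"
      using competitor[OF k1 kr fV n4 X0(1,2)] by blast
    have K0H: "card (Ksys r k V X0) \<le> card H" using maxK X0 by blast
    have l1: "(card V - (2*k - 1)) choose (r - k) \<le> card H" using c0 K0H le_trans by blast
    then have lowH: "(n - (2*k - 1)) choose (r - k) \<le> card H" using cV by simp
    have Hne: "H \<noteq> {}" using c0 K0H by auto
    have codH: "codeg_ok r k H" using codeg_from_mpc[OF fH Hne CH] HV by blast
    consider "k = r" | "k < r" using kr by linarith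
    then show "kernel_system r k V H"
    proof cases
      case 1
      have unifk: "\<forall>W\<in>H. finite W \<and> card W = k" using unifH 1 by simp
      have codk: "codeg_ok k k H" using codH 1 by simp
      obtain X where X: "finite X" "card X = 2*k - 1" and HX: "H = {U. U \<subseteq> X \<and> card U = k}"
        using kernel_lemma[OF k1 fH Hne unifk IH codk] by blast
      have XV: "X \<subseteq> V"
      proof
        fix x assume x: "x \<in> X"
        have "k - 1 \<le> card (X - {x})" using X x by simp
        then obtain U0 where U0: "U0 \<subseteq> X - {x}" "card U0 = k - 1" "finite U0"
          using obtain_subset_with_card_n[of "k - 1" "X - {x}"] by blast
        have "x \<notin> U0" using U0 by blast
        then have "card (insert x U0) = k" using U0 k1 by simp
        moreover have "insert x U0 \<subseteq> X" using U0 x by blast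
        ultimately have "insert x U0 \<in> H" using HX by blast
        then show "x \<in> V" using HV by blast
      qed
      have "H = {E. E \<subseteq> V \<and> card E = r \<and> k \<le> card (E \<inter> X)}"
      proof
        show "H \<subseteq> {E. E \<subseteq> V \<and> card E = r \<and> k \<le> card (E \<inter> X)}"
        proof
          fix E assume E: "E \<in> H"
          then have EX: "E \<subseteq> X" "card E = k" using HX by auto
          then have "E \<inter> X = E" by blast
          then show "E \<in> {E. E \<subseteq> V \<and> card E = r \<and> k \<le> card (E \<inter> X)}"
            using EX XV 1 by auto
        qed
        show "{E. E \<subseteq> V \<and> card E = r \<and> k \<le> card (E \<inter> X)} \<subseteq> H"
        proof
          fix E assume E: "E \<in> {E. E \<subseteq> V \<and> card E = r \<and> k \<le> card (E \<inter> X)}"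
          then have EV: "E \<subseteq> V" "card E = k" "k \<le> card (E \<inter> X)" using 1 by auto
          have fE: "finite E" using EV(1) fV finite_subset by blast
          have "card (E \<inter> X) \<le> card E" using fE by (intro card_mono) auto
          then have "card (E \<inter> X) = card E" using EV by linarith
          then have "E \<inter> X = E" using card_subset_eq[of E "E \<inter> X"] fE by blast
          then have "E \<subseteq> X" by blast
          then show "E \<in> H" using HX EV(2) by blast
        qed
      qed
      then show ?thesis unfolding kernel_system_def using XV X(2) by blast
    next
      case 2
      obtain Z where Z: "Z \<subseteq> V" "finite Z" "card Z \<le> Bf r k" "\<forall>E\<in>H. k \<le> card (E \<inter> Z)"
        using Z_exists[OF fH Hne unifH _ codH IH, of V k] HV by blast
      interpret S: setting r k V H Z B
        using k1 2 fV HV IH codH Z unfolding B_def by unfold_locales auto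
      have DD: "S.D = Dc" unfolding S.D_def S.P_def Dc_def by simp
      have CC: "S.C1 = n choose (r - k - 1)" unfolding S.C1_def using cV by simp
      have "Dc * (n choose (r - k - 1)) < (n - (2*k - 1)) choose (r - k)"
        using asym[of "r - k" r n "2*k - 1" Dc] 2 n4 cV nD kr by simp
      then have "Dc * (n choose (r - k - 1)) < card H" using lowH by linarith
      then have "S.D * S.C1 < card H" using DD CC by simp
      then obtain X where "X \<subseteq> V" "card X = 2*k - 1" "H = Ksys r k V X"
        using S.final maxK by blast
      then show ?thesis unfolding kernel_system_def Ksys_def by blast
    qed
  qed
qed

end
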